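(* Let $\xi$ be a probability measure on $\mathbb{Z}_+$ with $\xi(0)>0$, $\sum_kk\xi(k)=1$, whose support generates $\mathbb{Z}$. (i) For every $n\geq1$ with $\mathrm{GW}_\xi(\#t=n)>0$, the law $\mathrm{GW}^{(n)}_\xi=\mathrm{GW}_\xi(\cdot\mid\#t=n)$ on rooted unordered trees equals $\mathsf{Q}^q_n$, where $q_1((1))=1$ and for $n\geq2$ (with $\mathrm{GW}_\xi(\#t=n+1)>0$) and $\lambda=(\lambda_1,\dots,\lambda_p)\in\mathcal{P}_n$, $$q_n(\lambda)=\frac{p!}{\prod_{j\geq1}m_j(\lambda)!}\xi(p)\frac{\prod_{i=1}^p\mathrm{GW}_\xi(\#t=\lambda_i)}{\mathrm{GW}_\xi(\#t=n+1)}.$$ (ii) Let $X_1,X_2,\dots$ be i.i.d. with $\mathbb{P}(X_1=k)=\mathrm{GW}_\xi(\#t=k)$ and $\tau_p=X_1+\dots+X_p$. Then $q_n(p(\lambda)=p)=\xi(p)\mathbb{P}(\tau_p=n)/\mathbb{P}(\tau_1=n+1)$, and $q_n(\cdot\mid p(\lambda)=p)$ is the law of the non-increasing rearrangement of $(X_1,\dots,X_p)$ conditionally on $X_1+\dots+X_p=n$.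
   Context: $\mathrm{GW}_\xi$ is the Galton--Watson law on plane trees, $\mathrm{GW}_\xi(\{t\})=\prod_{u\in t}\xi(c_u(t))$ ($c_u$ the number of children), pushed forward to rooted unordered trees; $\#t$ is the number of vertices. $\mathcal{P}_n$ is the set of partitions of $n$, $p(\lambda)$ the number of parts and $m_j(\lambda)$ the number of parts equal to $j$. The laws $\mathsf{Q}^q_n$ on trees with $n$ vertices: $\mathsf{Q}^q_1$ is the law of the one-vertex tree; $\mathsf{Q}^q_{n+1}$ is the law of the tree whose root has as children the roots of independent trees $T^{(1)},\dots,T^{(p(\Lambda))}$ with laws $\mathsf{Q}^q_{\Lambda_i}$, where $\Lambda\sim q_n$. *)

theory Defs
  imports "HOL-Probability.Probability_Mass_Function" "HOL-Library.Multiset"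
begin

datatype ptree = PNode "ptree list"

datatype utree = UNode "utree multiset"

fun ptsize :: "ptree \<Rightarrow> nat" where
  "ptsize (PNode ts) = Suc (sum_list (map ptsize ts))"

fun forget :: "ptree \<Rightarrow> utree" where
  "forget (PNode ts) = UNode (mset (map forget ts))"

fun gw_w :: "nat pmf \<Rightarrow> ptree \<Rightarrow> real" where
  "gw_w \<xi> (PNode ts) = pmf \<xi> (length ts) * prod_list (map (gw_w \<xi>) ts)"

definition GW_size :: "nat pmf \<Rightarrow> nat \<Rightarrow> real" where
  "GW_size \<xi> n = (\<Sum>t\<in>{t. ptsize t = n}. gw_w \<xi> t)"

text \<open>Mass function of GW_xi^(n) = GW_xi( . | #t = n), pushed forward to unordered trees.\<close>
definition gw_cond :: "nat pmf \<Rightarrow> nat \<Rightarrow> utree \<Rightarrow> real" where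
  "gw_cond \<xi> n u = (\<Sum>t\<in>{t. ptsize t = n \<and> forget t = u}. gw_w \<xi> t) / GW_size \<xi> n"

text \<open>A partition of n is a multiset of positive integers summing to n;
  p(lambda) = size lambda, m_j(lambda) = count lambda j.\<close>
definition partitions :: "nat \<Rightarrow> nat multiset set" where
  "partitions n = {lam. (\<forall>j\<in>#lam. 0 < j) \<and> sum_mset lam = n}"

text \<open>q n is a mass function on partitions of n. For n+2 vertices: sum over lambda
  (drawn from q (n+1)) of the probability that independent trees with laws Q_{lambda_i}
  form the multiset M of subtrees of the root.\<close>
function Qlaw :: "(nat \<Rightarrow> nat multiset \<Rightarrow> real) \<Rightarrow> nat \<Rightarrow> utree \<Rightarrow> real" where
  "Qlaw q 0 u = 0"
| "Qlaw q (Suc 0) u = (if u = UNode {#} then 1 else 0)"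
| "Qlaw q (Suc (Suc n)) (UNode M) =
     (\<Sum>lam\<in>partitions (Suc n). q (Suc n) lam *
        (\<Sum>ts\<in>{ts. mset ts = M}.
           (if length ts = size lam then
              (\<Prod>i<length ts. (if sorted_list_of_multiset lam ! i \<le> Suc n
                  then Qlaw q (sorted_list_of_multiset lam ! i) (ts ! i) else 0))
            else 0)))"
  by pat_completeness auto
termination
  by (relation "Wellfounded.measure (\<lambda>(q, n, u). n)") auto

definition gw_q :: "nat pmf \<Rightarrow> nat \<Rightarrow> nat multiset \<Rightarrow> real" where
  "gw_q \<xi> n lam =
     (if lam \<notin> partitions n then 0
      else if n = 1 then (if lam = {#1#} then 1 else 0)
      else fact (size lam) / (\<Prod>j\<in>set_mset lam. fact (count lam j)) * pmf \<xi> (size lam)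
           * (\<Prod>i\<in>#lam. GW_size \<xi> i) / GW_size \<xi> (n + 1))"

text \<open>P(tau_p = n) for tau_p = X_1 + ... + X_p, X_i iid with P(X = k) = GW_xi(#t = k).\<close>
definition tau_prob :: "nat pmf \<Rightarrow> nat \<Rightarrow> nat \<Rightarrow> real" where
  "tau_prob \<xi> p n = (\<Sum>xs\<in>{xs. length xs = p \<and> sum_list xs = n}. prod_list (map (GW_size \<xi>) xs))"

text \<open>P(non-increasing rearrangement of (X_1..X_p) equals lambda, and X_1+...+X_p = n);
  the rearrangement is identified with the multiset of its entries.\<close>
definition rearr_prob :: "nat pmf \<Rightarrow> nat \<Rightarrow> nat \<Rightarrow> nat multiset \<Rightarrow> real" where
  "rearr_prob \<xi> p n lam =
     (\<Sum>xs\<in>{xs. length xs = p \<and> sum_list xs = n \<and> mset xs = lam}. prod_list (map (GW_size \<xi>) xs))"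

definition generates_int :: "nat set \<Rightarrow> bool" where
  "generates_int S \<longleftrightarrow>
     (\<forall>G::int set. 0 \<in> G \<and> (\<forall>x\<in>G. \<forall>y\<in>G. x - y \<in> G) \<and> int ` S \<subseteq> G \<longrightarrow> G = UNIV)"

end

theory Submission
  imports Defs "HOL-Combinatorics.Multiset_Permutations"
begin


primrec usize :: "utree \<Rightarrow> nat" where
  "usize (UNode M) = Suc (sum_mset (image_mset usize M))"

lemma usize_forget: "usize (forget t) = ptsize t"
proof (induction t)
  case (PNode ts)
  have e: "map usize (map forget ts) = map ptsize ts" using PNode by auto
  have "sum_mset (image_mset usize (mset (map forget ts))) = sum_list (map usize (map forget ts))"
    by (simp only: mset_map[symmetric] sum_mset_sum_list)
  then show ?case using e by (simp only: forget.simps usize.simps ptsize.simps)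
qed

lemma ptsize_pos: "ptsize t \<ge> 1" by (cases t) auto

lemma usize_pos: "usize u \<ge> 1" by (cases u) auto

lemma gw_w_nonneg: "gw_w \<xi> t \<ge> 0"
  by (induction t) (auto intro!: prod_list_nonneg mult_nonneg_nonneg)

lemma finite_size_le: "finite {t. ptsize t \<le> n}"
proof (induction n)
  case 0
  have "{t. ptsize t \<le> 0} = {}" using ptsize_pos not_one_le_zero le_trans by blast
  then show ?case by (simp only: finite.emptyI)
next
  case (Suc n)
  have sub: "{t. ptsize t \<le> Suc n} \<subseteq> PNode ` {ts. set ts \<subseteq> {t. ptsize t \<le> n} \<and> length ts \<le> n}"
  proof
    fix t assume "t \<in> {t. ptsize t \<le> Suc n}"
    then obtain ts where t: "t = PNode ts" and s: "sum_list (map ptsize ts) \<le> n" by (cases t) auto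
    have "\<forall>x\<in>set ts. ptsize x \<le> n"
      using s member_le_sum_list[of _ "map ptsize ts"] by fastforce
    moreover have "length ts \<le> sum_list (map ptsize ts)"
      using ptsize_pos sum_list_mono[of ts "\<lambda>_. 1::nat" ptsize] by (simp add: sum_list_triv)
    ultimately show "t \<in> PNode ` {ts. set ts \<subseteq> {t. ptsize t \<le> n} \<and> length ts \<le> n}"
      using t s by auto
  qed
  show ?case by (rule finite_subset[OF sub]) (intro finite_imageI finite_lists_length_le Suc)
qed

lemma finite_size: "finite {t. ptsize t = n}"
  by (rule finite_subset[OF _ finite_size_le[of n]]) auto

lemma finite_forget: "finite {t. forget t = u}"
  by (rule finite_subset[OF _ finite_size[of "usize u"]]) (auto simp: usize_forget)

definition V :: "nat pmf \<Rightarrow> utree \<Rightarrow> real" where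
  "V \<xi> u = (\<Sum>t\<in>{t. forget t = u}. gw_w \<xi> t)"

lemma forget_list_Cons:
  "{ts. map forget ts = u#us} = (\<lambda>(t,ts). t#ts) ` ({t. forget t = u} \<times> {ts. map forget ts = us})"
  by (auto simp: map_eq_Cons_conv)

lemma finite_forget_list: "finite {ts. map forget ts = us}"
proof (induction us)
  case Nil
  then show ?case by simp
next
  case (Cons u us)
  show ?case unfolding forget_list_Cons
    by (intro finite_imageI finite_cartesian_product finite_forget Cons)
qed

lemma sum_forget_list:
  "(\<Sum>ts\<in>{ts. map forget ts = us}. prod_list (map (gw_w \<xi>) ts)) = prod_list (map (V \<xi>) us)"
proof (induction us)
  case Nil
  then show ?case by simp
next
  case (Cons u us)
  have inj: "inj_on (\<lambda>(t,ts). t#ts) ({t. forget t = u} \<times> {ts. map forget ts = us})"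
    by (auto simp: inj_on_def)
  have "(\<Sum>ts\<in>{ts. map forget ts = u#us}. prod_list (map (gw_w \<xi>) ts))
      = (\<Sum>p\<in>{t. forget t = u} \<times> {ts. map forget ts = us}. gw_w \<xi> (fst p) * prod_list (map (gw_w \<xi>) (snd p)))"
    unfolding forget_list_Cons by (subst sum.reindex[OF inj]) (auto intro!: sum.cong)
  also have "\<dots> = (\<Sum>t\<in>{t. forget t = u}. \<Sum>ts\<in>{ts. map forget ts = us}. gw_w \<xi> t * prod_list (map (gw_w \<xi>) ts))"
    by (subst sum.cartesian_product) (simp add: case_prod_beta)
  also have "\<dots> = V \<xi> u * prod_list (map (V \<xi>) us)"
    unfolding V_def Cons.IH[symmetric] by (simp add: sum_product)
  finally show ?case by simp
qed

lemma V_UNode: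
  "V \<xi> (UNode M) = pmf \<xi> (size M) * real (card (permutations_of_multiset M)) * prod_mset (image_mset (V \<xi>) M)"
proof -
  define S where "S = {ts. mset (map forget ts) = M}"
  have finS: "finite S"
  proof (rule finite_subset)
    show "S \<subseteq> (\<Union>us\<in>permutations_of_multiset M. {ts. map forget ts = us})"
      by (auto simp: S_def permutations_of_multiset_def)
    show "finite (\<Union>us\<in>permutations_of_multiset M. {ts. map forget ts = us})"
      by (intro finite_UN_I finite_permutations_of_multiset finite_forget_list)
  qed
  have set: "{t. forget t = UNode M} = PNode ` S"
  proof safe
    fix t assume "forget t = UNode M" then show "t \<in> PNode ` S" by (cases t) (auto simp: S_def)
  qed (auto simp: S_def)
  have "V \<xi> (UNode M) = (\<Sum>ts\<in>S. gw_w \<xi> (PNode ts))"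
    unfolding V_def set by (subst sum.reindex) (auto simp: inj_on_def)
  also have "\<dots> = (\<Sum>ts\<in>S. pmf \<xi> (size M) * prod_list (map (gw_w \<xi>) ts))"
  proof (rule sum.cong)
    fix ts assume "ts \<in> S"
    then have "mset (map forget ts) = M" unfolding S_def by simp
    then have "size (mset (map forget ts)) = size M" by simp
    then have "length ts = size M" by simp
    then show "gw_w \<xi> (PNode ts) = pmf \<xi> (size M) * prod_list (map (gw_w \<xi>) ts)" by simp
  qed simp
  also have "\<dots> = pmf \<xi> (size M) * (\<Sum>ts\<in>S. prod_list (map (gw_w \<xi>) ts))"
    by (simp add: sum_distrib_left)
  also have "(\<Sum>ts\<in>S. prod_list (map (gw_w \<xi>) ts))
      = (\<Sum>us\<in>map forget ` S. \<Sum>ts\<in>{x\<in>S. map forget x = us}. prod_list (map (gw_w \<xi>) ts))"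
    by (rule sum.image_gen[OF finS])
  also have "\<dots> = (\<Sum>us\<in>permutations_of_multiset M. \<Sum>ts\<in>{x\<in>S. map forget x = us}. prod_list (map (gw_w \<xi>) ts))"
  proof (rule sum.mono_neutral_left)
    show "map forget ` S \<subseteq> permutations_of_multiset M"
      by (auto simp: S_def permutations_of_multiset_def)
    show "\<forall>i\<in>permutations_of_multiset M - map forget ` S.
            (\<Sum>ts\<in>{x \<in> S. map forget x = i}. prod_list (map (gw_w \<xi>) ts)) = 0"
    proof
      fix i assume "i \<in> permutations_of_multiset M - map forget ` S"
      then have "{x \<in> S. map forget x = i} = {}" by auto
      then show "(\<Sum>ts\<in>{x \<in> S. map forget x = i}. prod_list (map (gw_w \<xi>) ts)) = 0" by (simp only: sum.empty)
    qed
  qed simp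
  also have "\<dots> = (\<Sum>us\<in>permutations_of_multiset M. prod_mset (image_mset (V \<xi>) M))"
  proof (rule sum.cong)
    fix us assume us: "us \<in> permutations_of_multiset M"
    then have "{x\<in>S. map forget x = us} = {ts. map forget ts = us}"
      by (auto simp: S_def permutations_of_multiset_def)
    moreover have "prod_list (map (V \<xi>) us) = prod_mset (image_mset (V \<xi>) M)"
    proof -
      have "mset us = M" using us by (simp add: permutations_of_multiset_def)
      then have eq: "image_mset (V \<xi>) M = mset (map (V \<xi>) us)" by simp
      show ?thesis by (simp only: eq prod_mset_prod_list)
    qed
    ultimately show "(\<Sum>ts\<in>{x\<in>S. map forget x = us}. prod_list (map (gw_w \<xi>) ts)) = prod_mset (image_mset (V \<xi>) M)"
      using sum_forget_list by simp
  qed simp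
  finally show ?thesis by simp
qed

lemma permute_list_inv_cancel:
  assumes "\<sigma> permutes {..<length xs}"
  shows "permute_list (inv \<sigma>) (permute_list \<sigma> xs) = xs"
proof -
  have "inv \<sigma> permutes {..<length xs}" using assms by (rule permutes_inv)
  then have "permute_list (inv \<sigma>) (permute_list \<sigma> xs) = permute_list (\<sigma> \<circ> inv \<sigma>) xs"
    by (simp add: permute_list_compose)
  also have "\<sigma> \<circ> inv \<sigma> = id" using assms by (rule permutes_inv_o)
  finally show ?thesis by simp
qed

lemma fiber_le:
  assumes ks: "ks \<in> permutations_of_multiset (image_mset f M)"
    and ks': "ks' \<in> permutations_of_multiset (image_mset f M)"
  shows "card {ts \<in> permutations_of_multiset M. map f ts = ks}
       \<le> card {ts \<in> permutations_of_multiset M. map f ts = ks'}"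
proof -
  have "mset ks' = mset ks" using ks ks' by (simp add: permutations_of_multiset_def)
  then obtain \<sigma> where \<sigma>: "\<sigma> permutes {..<length ks}" "permute_list \<sigma> ks = ks'"
    by (rule mset_eq_permutation)
  let ?A = "{ts \<in> permutations_of_multiset M. map f ts = ks}"
  let ?B = "{ts \<in> permutations_of_multiset M. map f ts = ks'}"
  have len: "length ts = length ks" if "ts \<in> ?A" for ts
    using that by (metis (mono_tags, lifting) length_map mem_Collect_eq)
  show ?thesis
  proof (rule card_inj_on_le)
    show "inj_on (permute_list \<sigma>) ?A"
    proof (rule inj_onI)
      fix x y assume x: "x \<in> ?A" and y: "y \<in> ?A" and e: "permute_list \<sigma> x = permute_list \<sigma> y"
      have "x = permute_list (inv \<sigma>) (permute_list \<sigma> x)"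
        using permute_list_inv_cancel[of \<sigma> x] \<sigma>(1) len[OF x] by simp
      also have "\<dots> = permute_list (inv \<sigma>) (permute_list \<sigma> y)" using e by simp
      also have "\<dots> = y" using permute_list_inv_cancel[of \<sigma> y] \<sigma>(1) len[OF y] by simp
      finally show "x = y" .
    qed
    show "permute_list \<sigma> ` ?A \<subseteq> ?B"
    proof
      fix z assume "z \<in> permute_list \<sigma> ` ?A"
      then obtain ts where ts: "ts \<in> ?A" and z: "z = permute_list \<sigma> ts" by blast
      have p: "\<sigma> permutes {..<length ts}" using \<sigma>(1) len[OF ts] by simp
      have "mset z = M" using ts z p by (simp add: permutations_of_multiset_def)
      moreover have "map f z = ks'"
        using ts z p \<sigma>(2) by (simp add: permute_list_map[symmetric])
      ultimately show "z \<in> ?B" by (simp add: permutations_of_multiset_def)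
    qed
    show "finite ?B" by simp
  qed
qed

lemma fiber_card:
  assumes ks0: "ks0 \<in> permutations_of_multiset (image_mset f M)"
  shows "card (permutations_of_multiset M)
       = card (permutations_of_multiset (image_mset f M)) * card {ts \<in> permutations_of_multiset M. map f ts = ks0}"
proof -
  have "card (permutations_of_multiset M) = (\<Sum>ts\<in>permutations_of_multiset M. 1)" by (rule card_eq_sum)
  also have "\<dots> = (\<Sum>ks\<in>map f ` permutations_of_multiset M. \<Sum>ts\<in>{x \<in> permutations_of_multiset M. map f x = ks}. 1)"
    by (rule sum.image_gen) simp
  also have "\<dots> = (\<Sum>ks\<in>permutations_of_multiset (image_mset f M). card {ts \<in> permutations_of_multiset M. map f ts = ks0})"
  proof (rule sum.cong)
    show "map f ` permutations_of_multiset M = permutations_of_multiset (image_mset f M)"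
      by (simp add: permutations_of_multiset_image)
    fix ks assume "ks \<in> permutations_of_multiset (image_mset f M)"
    then show "(\<Sum>ts\<in>{x \<in> permutations_of_multiset M. map f x = ks}. 1) = card {ts \<in> permutations_of_multiset M. map f ts = ks0}"
      using fiber_le[OF _ ks0] fiber_le[OF ks0] by (simp add: card_eq_sum[symmetric] antisym)
  qed
  finally show ?thesis by simp
qed

lemma real_card_perms:
  "real (card (permutations_of_multiset A)) = fact (size A) / (\<Prod>x\<in>set_mset A. fact (count A x))"
proof -
  have d: "(\<Prod>x\<in>set_mset A. fact (count A x) :: nat) dvd fact (size A)"
    by (rule card_permutations_of_multiset(2))
  show ?thesis unfolding card_permutations_of_multiset(1) real_of_nat_div[OF d]
    by (simp add: of_nat_prod)
qed

lemma gw_cond_eq: "gw_cond \<xi> n u = (if usize u = n then V \<xi> u else 0) / GW_size \<xi> n"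
proof -
  have "{t. ptsize t = n \<and> forget t = u} = (if usize u = n then {t. forget t = u} else {})"
    by (auto simp: usize_forget[symmetric])
  then show ?thesis unfolding gw_cond_def V_def by simp
qed

lemma V_nonneg: "V \<xi> u \<ge> 0"
  unfolding V_def by (intro sum_nonneg gw_w_nonneg)

lemma V_le: "V \<xi> u \<le> GW_size \<xi> (usize u)"
  unfolding V_def GW_size_def
  by (intro sum_mono2 finite_size gw_w_nonneg) (auto simp: usize_forget)

lemma V_zero: "GW_size \<xi> (usize u) = 0 \<Longrightarrow> V \<xi> u = 0"
  using V_le[of \<xi> u] V_nonneg[of \<xi> u] by simp

lemma GW_size_nonneg: "GW_size \<xi> n \<ge> 0"
  unfolding GW_size_def by (intro sum_nonneg gw_w_nonneg)

lemma GW_size_0: "GW_size \<xi> 0 = 0"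
proof -
  have "ptsize x \<noteq> 0" for x using ptsize_pos[of x] by arith
  then have e: "{t. ptsize t = 0} = {}" by auto
  show ?thesis unfolding GW_size_def by (simp only: e sum.empty)
qed

lemma ptsize_nz[simp]: "ptsize t \<noteq> 0" using ptsize_pos[of t] by arith

lemma ptsize_1: "ptsize t = 1 \<longleftrightarrow> t = PNode []"
proof (cases t)
  case (PNode ts)
  have nz: "ptsize x \<noteq> 0" for x using ptsize_pos[of x] by arith
  have "sum_list (map ptsize ts) = 0 \<longleftrightarrow> ts = []"
    using nz by (cases ts) auto
  then show ?thesis using PNode by auto
qed

lemma ptsize_2: "ptsize t = 2 \<longleftrightarrow> t = PNode [PNode []]"
proof (cases t)
  case (PNode ts)
  have "sum_list (map ptsize ts) = 1 \<longleftrightarrow> ts = [PNode []]"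
  proof
    assume s: "sum_list (map ptsize ts) = 1"
    then obtain x xs where ts: "ts = x # xs" by (cases ts) auto
    have "ptsize x \<ge> 1" by (rule ptsize_pos)
    moreover have "sum_list (map ptsize xs) = 0 \<longrightarrow> xs = []"
      using ptsize_pos by (cases xs) (auto simp: not_one_le_zero)
    moreover have "ptsize x + sum_list (map ptsize xs) = 1" using s ts by simp
    ultimately have "ptsize x = 1 \<and> xs = []" by arith
    then show "ts = [PNode []]" using ts ptsize_1 by auto
  qed simp
  then show ?thesis using PNode by (auto simp: numeral_2_eq_2)
qed

lemma GW_size_1: "GW_size \<xi> 1 = pmf \<xi> 0"
proof -
  have "{t. ptsize t = 1} = {PNode []}" using ptsize_1 by auto
  then show ?thesis unfolding GW_size_def by simp
qed

lemma GW_size_2: "GW_size \<xi> 2 = pmf \<xi> 1 * pmf \<xi> 0"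
proof -
  have "{t. ptsize t = 2} = {PNode [PNode []]}" using ptsize_2 by auto
  then show ?thesis unfolding GW_size_def by simp
qed

lemma partitions_1: "partitions 1 = {{#1#}}"
proof safe
  fix lam assume "lam \<in> partitions 1"
  then have pos: "\<forall>j\<in>#lam. 0 < j" and s: "sum_mset lam = 1" by (auto simp: partitions_def)
  have "lam \<noteq> {#}" using s by auto
  then obtain x where x: "x \<in># lam" by blast
  define rest where "rest = lam - {#x#}"
  have lam: "lam = add_mset x rest" using x unfolding rest_def by simp
  have "x > 0" using pos lam by auto
  moreover have "x + sum_mset rest = 1" using s lam by simp
  ultimately have "x = 1 \<and> sum_mset rest = 0" by arith
  moreover have "rest = {#}"
  proof (rule ccontr)
    assume "rest \<noteq> {#}"
    then obtain y where "y \<in># rest" by blast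
    then have "y \<in># lam" "y \<in># rest" using lam by auto
    moreover have "sum_mset rest = 0" using \<open>x = 1 \<and> sum_mset rest = 0\<close> by simp
    ultimately have "y = 0" "y > 0" using pos by (auto simp: sum_mset_0_iff)
    then show False by simp
  qed
  ultimately show "lam = {#1#}" using lam by simp
qed (auto simp: partitions_def)

lemma gw_q_formula:
  assumes "n \<ge> 1" "lam \<in> partitions n" "GW_size \<xi> (n + 1) > 0"
  shows "gw_q \<xi> n lam = real (card (permutations_of_multiset lam)) * pmf \<xi> (size lam)
            * (\<Prod>i\<in>#lam. GW_size \<xi> i) / GW_size \<xi> (n + 1)"
proof (cases "n = 1")
  case True
  then have lam: "lam = {#1#}" using assms partitions_1 by auto
  have "GW_size \<xi> 2 > 0" using assms(3) True by (simp add: numeral_2_eq_2)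
  then have "pmf \<xi> 1 * pmf \<xi> 0 > 0" using GW_size_2[of \<xi>] by simp
  moreover have g1: "GW_size \<xi> (Suc 0) = pmf \<xi> 0" using GW_size_1[of \<xi>] by simp
  moreover have g2: "GW_size \<xi> (Suc (Suc 0)) = pmf \<xi> 1 * pmf \<xi> 0" using GW_size_2[of \<xi>] by (simp add: numeral_2_eq_2)
  moreover have "pmf \<xi> 1 \<noteq> 0 \<and> pmf \<xi> 0 \<noteq> 0" using \<open>pmf \<xi> 1 * pmf \<xi> 0 > 0\<close> by auto
  ultimately show ?thesis using True lam by (simp add: gw_q_def partitions_def)
next
  case False
  then show ?thesis using assms by (simp add: gw_q_def real_card_perms)
qed

lemma mem_le_sum_mset: "(j::nat) \<in># lam \<Longrightarrow> j \<le> sum_mset lam"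
proof -
  assume "j \<in># lam"
  then obtain A where "lam = add_mset j A" by (blast dest: multi_member_split)
  then show ?thesis by simp
qed

lemma finite_partitions: "finite (partitions n)"
proof (rule finite_subset)
  show "partitions n \<subseteq> mset ` {xs. set xs \<subseteq> {0..n} \<and> length xs \<le> n}"
  proof
    fix lam assume lam: "lam \<in> partitions n"
    define xs where "xs = sorted_list_of_multiset lam"
    have m: "mset xs = lam" by (simp add: xs_def)
    have pos: "\<forall>x\<in>set xs. 0 < x" and s: "sum_list xs = n"
      using lam m by (auto simp: partitions_def xs_def sum_mset_sum_list[symmetric])
    have "set xs \<subseteq> {0..n}" using s member_le_sum_list[of _ xs] by auto
    moreover have "length xs \<le> sum_list xs"
      using pos sum_list_mono[of xs "\<lambda>_. 1::nat" "\<lambda>x. x"] by (simp add: sum_list_triv Suc_le_eq)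
    ultimately show "lam \<in> mset ` {xs. set xs \<subseteq> {0..n} \<and> length xs \<le> n}"
      using m s by blast
  qed
  show "finite (mset ` {xs. set xs \<subseteq> {0..n} \<and> length xs \<le> n})"
    by (intro finite_imageI finite_lists_length_le) simp
qed

lemma prod_gwcond:
  fixes Qf :: "nat \<Rightarrow> utree \<Rightarrow> real"
  assumes len: "length ts = length ks"
    and h: "\<And>i. i < length ts \<Longrightarrow> Qf (ks!i) (ts!i) = (if usize (ts!i) = ks!i then W (ts!i) else 0) / G (ks!i)"
  shows "(\<Prod>i<length ts. Qf (ks!i) (ts!i))
       = (if map usize ts = ks then prod_list (map W ts) / prod_list (map G ks) else 0)"
proof (cases "map usize ts = ks")
  case True
  then have "\<And>i. i < length ts \<Longrightarrow> usize (ts!i) = ks!i" by auto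
  then have "(\<Prod>i<length ts. Qf (ks!i) (ts!i)) = (\<Prod>i<length ts. W (ts!i) / G (ks!i))"
    using h by (intro prod.cong) auto
  also have "\<dots> = (\<Prod>i<length ts. W (ts!i)) / (\<Prod>i<length ts. G (ks!i))" by (rule prod_dividef)
  also have "(\<Prod>i<length ts. W (ts!i)) = prod_list (map W ts)"
    by (simp add: prod.list_conv_set_nth atLeast0LessThan)
  also have "(\<Prod>i<length ts. G (ks!i)) = prod_list (map G ks)"
    using len by (simp add: prod.list_conv_set_nth atLeast0LessThan)
  finally show ?thesis using True by simp
next
  case False
  have "\<not> (\<forall>i<length ts. usize (ts!i) = ks!i)" using False len by (auto simp: list_eq_iff_nth_eq)
  then obtain i where i: "i < length ts" "usize (ts!i) \<noteq> ks!i" by blast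
  then have "Qf (ks!i) (ts!i) = 0" using h by simp
  then have "(\<Prod>i<length ts. Qf (ks!i) (ts!i)) = 0" using i by (intro prod_zero) auto
  then show ?thesis using False by simp
qed

lemma length_sl: "length (sorted_list_of_multiset lam) = size lam"
proof -
  have "size (mset (sorted_list_of_multiset lam)) = size lam" by simp
  then show ?thesis by (simp only: size_mset)
qed

lemma step:
  fixes \<xi> :: "nat pmf" and m :: nat and M :: "utree multiset"
  assumes IH: "\<And>k. 1 \<le> k \<Longrightarrow> k \<le> Suc m \<Longrightarrow> GW_size \<xi> k > 0 \<Longrightarrow> gw_cond \<xi> k = Qlaw (gw_q \<xi>) k"
    and pos: "GW_size \<xi> (Suc (Suc m)) > 0"
  shows "gw_cond \<xi> (Suc (Suc m)) (UNode M) = Qlaw (gw_q \<xi>) (Suc (Suc m)) (UNode M)"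
proof -
  let ?q = "gw_q \<xi>"
  let ?P = "partitions (Suc m)"
  let ?sl = "sorted_list_of_multiset"
  let ?G = "GW_size \<xi>"
  define T' where "T' lam = (\<Sum>ts\<in>permutations_of_multiset M.
      if map usize ts = ?sl lam then prod_list (map (V \<xi>) ts) / prod_list (map ?G (?sl lam)) else 0)" for lam
  define lam0 where "lam0 = image_mset usize M"
  have A: "?q (Suc m) lam * (\<Sum>ts\<in>{ts. mset ts = M}. (if length ts = size lam then
              (\<Prod>i<length ts. (if ?sl lam ! i \<le> Suc m then Qlaw ?q (?sl lam ! i) (ts ! i) else 0))
            else 0)) = ?q (Suc m) lam * T' lam" if lam: "lam \<in> ?P" for lam
  proof (cases "?q (Suc m) lam = 0")
    case True then show ?thesis by simp
  next
    case False
    have qf: "?q (Suc m) lam = real (card (permutations_of_multiset lam)) * pmf \<xi> (size lam)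
            * (\<Prod>i\<in>#lam. ?G i) / ?G (Suc m + 1)"
      using lam pos by (intro gw_q_formula) auto
    then have "(\<Prod>i\<in>#lam. ?G i) \<noteq> 0" using False by auto
    then have Gpos: "?G j > 0" if "j \<in># lam" for j
      using that GW_size_nonneg[of \<xi> j] by (auto simp: less_le)
    have jle: "1 \<le> j \<and> j \<le> Suc m" if "j \<in># lam" for j
      using that lam mem_le_sum_mset[OF that] by (auto simp: partitions_def Suc_le_eq)
    have L: "length (?sl lam) = size lam" by (rule length_sl)
    show ?thesis unfolding T'_def
    proof (intro arg_cong[where f = "\<lambda>x. ?q (Suc m) lam * x"] sum.cong)
      show "{ts. mset ts = M} = permutations_of_multiset M" by (simp add: permutations_of_multiset_def)
      fix ts assume ts: "ts \<in> permutations_of_multiset M"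
      show "(if length ts = size lam then
              (\<Prod>i<length ts. (if ?sl lam ! i \<le> Suc m then Qlaw ?q (?sl lam ! i) (ts ! i) else 0))
            else 0) = (if map usize ts = ?sl lam then prod_list (map (V \<xi>) ts) / prod_list (map ?G (?sl lam)) else 0)"
      proof (cases "length ts = size lam")
        case False
        have "map usize ts \<noteq> ?sl lam"
        proof
          assume "map usize ts = ?sl lam"
          then have "length (map usize ts) = length (?sl lam)" by (rule arg_cong)
          then show False using L False by simp
        qed
        then show ?thesis using False by simp
      next
        case True
        have "(\<Prod>i<length ts. (\<lambda>k u. if k \<le> Suc m then Qlaw ?q k u else 0) (?sl lam ! i) (ts ! i))
            = (if map usize ts = ?sl lam then prod_list (map (V \<xi>) ts) / prod_list (map ?G (?sl lam)) else 0)"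
        proof (rule prod_gwcond)
          show "length ts = length (?sl lam)" using True L by simp
          fix i assume i: "i < length ts"
          have "?sl lam ! i \<in> set (?sl lam)" using i True L by (intro nth_mem) simp
          then have mem: "?sl lam ! i \<in># lam" by simp
          have "(if ?sl lam ! i \<le> Suc m then Qlaw ?q (?sl lam ! i) (ts ! i) else 0) = gw_cond \<xi> (?sl lam ! i) (ts ! i)"
            using jle[OF mem] IH[of "?sl lam ! i"] Gpos[OF mem] by simp
          then show "(\<lambda>k u. if k \<le> Suc m then Qlaw ?q k u else 0) (?sl lam ! i) (ts ! i)
              = (if usize (ts!i) = ?sl lam ! i then V \<xi> (ts!i) else 0) / ?G (?sl lam ! i)"
            by (simp add: gw_cond_eq)
        qed
        then show ?thesis using True by simp
      qed
    qed
  qed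
  have B: "?q (Suc m) lam * T' lam = (if lam = lam0 then ?q (Suc m) lam0 * T' lam0 else 0)" for lam
  proof (cases "lam = lam0")
    case False
    have "T' lam = 0" unfolding T'_def
    proof (rule sum.neutral, rule ballI)
      fix ts assume ts: "ts \<in> permutations_of_multiset M"
      have "map usize ts \<noteq> ?sl lam"
      proof
        assume "map usize ts = ?sl lam"
        then have "mset (map usize ts) = lam" by simp
        moreover have "mset (map usize ts) = lam0"
          using ts by (simp add: lam0_def permutations_of_multiset_def)
        ultimately show False using False by simp
      qed
      then show "(if map usize ts = ?sl lam then prod_list (map (V \<xi>) ts) / prod_list (map ?G (?sl lam)) else 0) = 0"
        by simp
    qed
    then show ?thesis using False by simp
  qed simp
  have Q: "Qlaw ?q (Suc (Suc m)) (UNode M) = (if lam0 \<in> ?P then ?q (Suc m) lam0 * T' lam0 else 0)"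
  proof -
    have "Qlaw ?q (Suc (Suc m)) (UNode M) = (\<Sum>lam\<in>?P. ?q (Suc m) lam * T' lam)"
      by (simp only: Qlaw.simps(3)) (intro sum.cong refl A)
    also have "\<dots> = (\<Sum>lam\<in>?P. if lam = lam0 then ?q (Suc m) lam0 * T' lam0 else 0)"
      by (intro sum.cong refl B)
    also have "\<dots> = (if lam0 \<in> ?P then ?q (Suc m) lam0 * T' lam0 else 0)"
      using finite_partitions by simp
    finally show ?thesis .
  qed
  define F where "F = {ts \<in> permutations_of_multiset M. map usize ts = ?sl lam0}"
  have C: "T' lam0 = real (card F) * (prod_mset (image_mset (V \<xi>) M) / prod_mset (image_mset ?G lam0))"
  proof -
    have "T' lam0 = (\<Sum>ts\<in>permutations_of_multiset M.
        if map usize ts = ?sl lam0 then prod_mset (image_mset (V \<xi>) M) / prod_mset (image_mset ?G lam0) else 0)"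
      unfolding T'_def
    proof (intro sum.cong refl)
      fix ts assume ts: "ts \<in> permutations_of_multiset M"
      then have "mset ts = M" by (simp add: permutations_of_multiset_def)
      then have e1: "image_mset (V \<xi>) M = mset (map (V \<xi>) ts)" by simp
      have e2: "image_mset ?G lam0 = mset (map ?G (?sl lam0))" by simp
      show "(if map usize ts = ?sl lam0 then prod_list (map (V \<xi>) ts) / prod_list (map ?G (?sl lam0)) else 0)
          = (if map usize ts = ?sl lam0 then prod_mset (image_mset (V \<xi>) M) / prod_mset (image_mset ?G lam0) else 0)"
        by (simp only: e1 e2 prod_mset_prod_list)
    qed
    also have "\<dots> = (\<Sum>ts\<in>F. prod_mset (image_mset (V \<xi>) M) / prod_mset (image_mset ?G lam0))"
      unfolding F_def by (rule sum.inter_filter[symmetric]) simp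
    also have "\<dots> = real (card F) * (prod_mset (image_mset (V \<xi>) M) / prod_mset (image_mset ?G lam0))"
      by simp
    finally show ?thesis .
  qed
  have mem0: "lam0 \<in> ?P \<longleftrightarrow> usize (UNode M) = Suc (Suc m)"
  proof -
    have "\<forall>j\<in>#lam0. 0 < j" using usize_pos by (auto simp: lam0_def Suc_le_eq)
    then show ?thesis by (simp add: partitions_def lam0_def)
  qed
  show ?thesis
  proof (cases "usize (UNode M) = Suc (Suc m)")
    case False
    then show ?thesis using Q mem0 by (simp add: gw_cond_eq)
  next
    case True
    have inP: "lam0 \<in> ?P" using True mem0 by simp
    have qf: "?q (Suc m) lam0 = real (card (permutations_of_multiset lam0)) * pmf \<xi> (size lam0)
            * (\<Prod>i\<in>#lam0. ?G i) / ?G (Suc m + 1)"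
      using inP pos by (intro gw_q_formula) auto
    have fc: "card (permutations_of_multiset M) = card (permutations_of_multiset lam0) * card F"
      unfolding F_def lam0_def by (rule fiber_card) (simp add: permutations_of_multiset_def)
    have sz: "size lam0 = size M" by (simp add: lam0_def)
    have lhs: "gw_cond \<xi> (Suc (Suc m)) (UNode M) = pmf \<xi> (size M) * real (card (permutations_of_multiset M))
         * prod_mset (image_mset (V \<xi>) M) / ?G (Suc (Suc m))"
      using True by (simp add: gw_cond_eq V_UNode)
    have rhs: "Qlaw ?q (Suc (Suc m)) (UNode M) = real (card (permutations_of_multiset lam0)) * pmf \<xi> (size M)
            * (\<Prod>i\<in>#lam0. ?G i) / ?G (Suc (Suc m)) * (real (card F) * (prod_mset (image_mset (V \<xi>) M) / prod_mset (image_mset ?G lam0)))"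
      using Q inP qf C sz by simp
    show ?thesis
    proof (cases "prod_mset (image_mset ?G lam0) = 0")
      case False
      then show ?thesis unfolding lhs rhs fc using pos by (simp add: field_simps)
    next
      case True
      then obtain j where j: "j \<in># lam0" "?G j = 0" by auto
      then obtain u where u: "u \<in># M" "usize u = j" by (auto simp: lam0_def)
      then have "V \<xi> u = 0" using j V_zero by simp
      then have "prod_mset (image_mset (V \<xi>) M) = 0" using u by force
      then show ?thesis unfolding lhs rhs using True by simp
    qed
  qed
qed

lemma usize_1: "usize u = 1 \<longleftrightarrow> u = UNode {#}"
proof (cases u)
  case (UNode M)
  have nz: "usize x \<noteq> 0" for x using usize_pos[of x] by arith
  have "sum_mset (image_mset usize M) = 0 \<longleftrightarrow> M = {#}"
  proof
    assume "sum_mset (image_mset usize M) = 0"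
    then have "\<forall>x\<in>#M. usize x = 0" by (simp add: sum_mset_0_iff)
    then show "M = {#}" using nz by (cases M) auto
  qed simp
  then show ?thesis using UNode by simp
qed

lemma part1:
  fixes \<xi> :: "nat pmf"
  shows "1 \<le> n \<Longrightarrow> GW_size \<xi> n > 0 \<Longrightarrow> gw_cond \<xi> n = Qlaw (gw_q \<xi>) n"
proof (induction n rule: less_induct)
  case (less n)
  show ?case
  proof (cases n)
    case 0 then show ?thesis using less by simp
  next
    case (Suc k)
    show ?thesis
    proof (cases k)
      case 0
      have g1: "GW_size \<xi> 1 = pmf \<xi> 0" by (rule GW_size_1)
      have p0: "pmf \<xi> 0 > 0" using less Suc 0 g1 by simp
      have v: "V \<xi> (UNode {#}) = pmf \<xi> 0" by (simp add: V_UNode)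
      show ?thesis
      proof
        fix u
        show "gw_cond \<xi> n u = Qlaw (gw_q \<xi>) n u"
          using Suc 0 g1 p0 v by (simp add: gw_cond_eq usize_1[simplified])
      qed
    next
      case (Suc m)
      show ?thesis
      proof
        fix u
        obtain M where u: "u = UNode M" by (cases u)
        have "gw_cond \<xi> (Suc (Suc m)) (UNode M) = Qlaw (gw_q \<xi>) (Suc (Suc m)) (UNode M)"
        proof (rule step)
          fix j assume "1 \<le> j" "j \<le> Suc m" "GW_size \<xi> j > 0"
          then show "gw_cond \<xi> j = Qlaw (gw_q \<xi>) j" using less.IH[of j] \<open>n = Suc k\<close> Suc by simp
        next
          show "GW_size \<xi> (Suc (Suc m)) > 0" using less.prems \<open>n = Suc k\<close> Suc by simp
        qed
        then show "gw_cond \<xi> n u = Qlaw (gw_q \<xi>) n u" using u \<open>n = Suc k\<close> Suc by simp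
      qed
    qed
  qed
qed

lemma tau_1: "tau_prob \<xi> 1 k = GW_size \<xi> k"
proof -
  have "{xs. length xs = 1 \<and> sum_list xs = k} = {[k]}"
    by (auto simp: length_Suc_conv)
  then show ?thesis unfolding tau_prob_def by simp
qed

lemma prod_zero_part: "\<not> (\<forall>j\<in>#lam. 0 < j) \<Longrightarrow> (\<Prod>i\<in>#lam. GW_size \<xi> i) = 0"
proof -
  assume "\<not> (\<forall>j\<in>#lam. 0 < j)"
  then have "0 \<in># lam" by auto
  then have "0 \<in># image_mset (GW_size \<xi>) lam" using GW_size_0[of \<xi>] by force
  then show ?thesis by simp
qed

lemma rearr_eq: "rearr_prob \<xi> p n lam = (if size lam = p \<and> sum_mset lam = n
    then real (card (permutations_of_multiset lam)) * (\<Prod>i\<in>#lam. GW_size \<xi> i) else 0)"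
proof (cases "size lam = p \<and> sum_mset lam = n")
  case True
  have "{xs. length xs = p \<and> sum_list xs = n \<and> mset xs = lam} = permutations_of_multiset lam"
    using True by (auto simp: permutations_of_multiset_def sum_mset_sum_list[symmetric])
  moreover have "prod_list (map (GW_size \<xi>) xs) = (\<Prod>i\<in>#lam. GW_size \<xi> i)" if "xs \<in> permutations_of_multiset lam" for xs
  proof -
    have "mset xs = lam" using that by (simp add: permutations_of_multiset_def)
    then have e: "image_mset (GW_size \<xi>) lam = mset (map (GW_size \<xi>) xs)" by simp
    show ?thesis by (simp only: e prod_mset_prod_list)
  qed
  ultimately show ?thesis unfolding rearr_prob_def using True by simp
next
  case False
  have e: "{xs. length xs = p \<and> sum_list xs = n \<and> mset xs = lam} = {}"
    using False by (auto simp: sum_mset_sum_list[symmetric])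
  show ?thesis unfolding rearr_prob_def e using False by (simp only: sum.empty if_False)
qed

lemma tau_group: "tau_prob \<xi> p n = (\<Sum>lam\<in>{lam\<in>partitions n. size lam = p}.
      real (card (permutations_of_multiset lam)) * (\<Prod>i\<in>#lam. GW_size \<xi> i))"
proof -
  define S where "S = {xs. length xs = p \<and> sum_list xs = n}"
  define L where "L = {lam. size lam = p \<and> sum_mset lam = n}"
  have finS: "finite S"
  proof (rule finite_subset)
    show "S \<subseteq> {xs. set xs \<subseteq> {0..n} \<and> length xs = p}"
      using member_le_sum_list by (fastforce simp: S_def)
    show "finite {xs. set xs \<subseteq> {0..n} \<and> length xs = p}" by (intro finite_lists_length_eq) simp
  qed
  have img: "mset ` S = L"
  proof safe
    fix xs assume "xs \<in> S" then show "mset xs \<in> L" by (simp add: S_def L_def sum_mset_sum_list)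
  next
    fix lam assume lam: "lam \<in> L"
    have "sorted_list_of_multiset lam \<in> S" using lam length_sl[of lam]
      by (simp add: S_def L_def sum_mset_sum_list[symmetric])
    then show "lam \<in> mset ` S" by (metis image_eqI mset_sorted_list_of_multiset)
  qed
  have "tau_prob \<xi> p n = (\<Sum>xs\<in>S. prod_list (map (GW_size \<xi>) xs))" by (simp add: tau_prob_def S_def)
  also have "\<dots> = (\<Sum>lam\<in>mset ` S. \<Sum>xs\<in>{x\<in>S. mset x = lam}. prod_list (map (GW_size \<xi>) xs))"
    by (rule sum.image_gen[OF finS])
  also have "\<dots> = (\<Sum>lam\<in>L. rearr_prob \<xi> p n lam)"
    unfolding img by (intro sum.cong refl) (simp add: S_def rearr_prob_def conj_assoc)
  also have "\<dots> = (\<Sum>lam\<in>{lam\<in>partitions n. size lam = p}. rearr_prob \<xi> p n lam)"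
  proof (rule sum.mono_neutral_right)
    show "finite L" using finS img by (metis finite_imageI)
    show "{lam\<in>partitions n. size lam = p} \<subseteq> L" by (auto simp: L_def partitions_def)
    show "\<forall>i\<in>L - {lam \<in> partitions n. size lam = p}. rearr_prob \<xi> p n i = 0"
    proof
      fix lam assume "lam \<in> L - {lam \<in> partitions n. size lam = p}"
      then have "size lam = p" "sum_mset lam = n" "\<not> (\<forall>j\<in>#lam. 0 < j)"
        by (auto simp: L_def partitions_def)
      then show "rearr_prob \<xi> p n lam = 0" by (simp add: rearr_eq prod_zero_part)
    qed
  qed
  also have "\<dots> = (\<Sum>lam\<in>{lam\<in>partitions n. size lam = p}.
      real (card (permutations_of_multiset lam)) * (\<Prod>i\<in>#lam. GW_size \<xi> i))"
    by (intro sum.cong refl) (auto simp: rearr_eq partitions_def)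
  finally show ?thesis .
qed

lemma tau_nonneg: "tau_prob \<xi> p n \<ge> 0"
  unfolding tau_prob_def by (intro sum_nonneg prod_list_nonneg) (auto intro: GW_size_nonneg)

lemma part2a:
  assumes "n \<ge> 1" "GW_size \<xi> (n + 1) > 0"
  shows "(\<Sum>lam\<in>{lam\<in>partitions n. size lam = p}. gw_q \<xi> n lam)
       = pmf \<xi> p * tau_prob \<xi> p n / tau_prob \<xi> 1 (n + 1)"
proof -
  have "(\<Sum>lam\<in>{lam\<in>partitions n. size lam = p}. gw_q \<xi> n lam)
      = (\<Sum>lam\<in>{lam\<in>partitions n. size lam = p}. pmf \<xi> p *
          (real (card (permutations_of_multiset lam)) * (\<Prod>i\<in>#lam. GW_size \<xi> i)) / GW_size \<xi> (n + 1))"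
    using assms by (intro sum.cong refl) (auto simp: gw_q_formula)
  also have "\<dots> = pmf \<xi> p * tau_prob \<xi> p n / GW_size \<xi> (n + 1)"
    unfolding tau_group by (simp add: sum_divide_distrib sum_distrib_left)
  finally show ?thesis by (simp only: tau_1)
qed

lemma part2b:
  assumes "n \<ge> 1" "GW_size \<xi> (n + 1) > 0"
    and pos: "(\<Sum>lam\<in>{lam\<in>partitions n. size lam = p}. gw_q \<xi> n lam) > 0"
  shows "(if size lam = p then gw_q \<xi> n lam else 0)
            / (\<Sum>mu\<in>{mu\<in>partitions n. size mu = p}. gw_q \<xi> n mu)
          = rearr_prob \<xi> p n lam / tau_prob \<xi> p n"
proof -
  have S: "(\<Sum>mu\<in>{mu\<in>partitions n. size mu = p}. gw_q \<xi> n mu) = pmf \<xi> p * tau_prob \<xi> p n / GW_size \<xi> (n + 1)"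
    using part2a[OF assms(1,2)] by (simp only: tau_1)
  have "pmf \<xi> p * tau_prob \<xi> p n \<noteq> 0" using pos S by auto
  then have pp: "pmf \<xi> p \<noteq> 0" and tp: "tau_prob \<xi> p n \<noteq> 0" by auto
  show ?thesis
  proof (cases "size lam = p \<and> lam \<in> partitions n")
    case True
    then have "sum_mset lam = n" by (simp add: partitions_def)
    then show ?thesis using True assms(1,2) pp tp unfolding S
      by (simp add: gw_q_formula rearr_eq field_simps)
  next
    case False
    have "rearr_prob \<xi> p n lam = 0"
    proof (cases "size lam = p \<and> sum_mset lam = n")
      case True
      then have "\<not> (\<forall>j\<in>#lam. 0 < j)" using False by (auto simp: partitions_def)
      then show ?thesis by (simp add: rearr_eq prod_zero_part)
    next
      case False
      then show ?thesis by (simp only: rearr_eq if_False)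
    qed
    moreover have "(if size lam = p then gw_q \<xi> n lam else 0) = 0"
      using False by (auto simp: gw_q_def)
    ultimately show ?thesis by simp
  qed
qed


theorem proposition14:
  fixes \<xi> :: "nat pmf"
  assumes "pmf \<xi> 0 > 0"
    and "(\<lambda>k. real k * pmf \<xi> k) sums 1"
    and "generates_int (set_pmf \<xi>)"
  shows "(\<forall>n\<ge>1. GW_size \<xi> n > 0 \<longrightarrow> gw_cond \<xi> n = Qlaw (gw_q \<xi>) n)
       \<and> (\<forall>n\<ge>1. GW_size \<xi> (n + 1) > 0 \<longrightarrow> (\<forall>p.
            (\<Sum>lam\<in>{lam\<in>partitions n. size lam = p}. gw_q \<xi> n lam)
              = pmf \<xi> p * tau_prob \<xi> p n / tau_prob \<xi> 1 (n + 1)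
          \<and> ((\<Sum>lam\<in>{lam\<in>partitions n. size lam = p}. gw_q \<xi> n lam) > 0 \<longrightarrow>
              (\<forall>lam. (if size lam = p then gw_q \<xi> n lam else 0)
                       / (\<Sum>mu\<in>{mu\<in>partitions n. size mu = p}. gw_q \<xi> n mu)
                     = rearr_prob \<xi> p n lam / tau_prob \<xi> p n))))"
proof (intro conjI allI impI)
  fix n :: nat assume "n \<ge> 1" "GW_size \<xi> n > 0"
  then show "gw_cond \<xi> n = Qlaw (gw_q \<xi>) n" by (rule part1)
next
  fix n p :: nat assume "n \<ge> 1" "GW_size \<xi> (n + 1) > 0"
  then show "(\<Sum>lam\<in>{lam\<in>partitions n. size lam = p}. gw_q \<xi> n lam)
              = pmf \<xi> p * tau_prob \<xi> p n / tau_prob \<xi> 1 (n + 1)" by (rule part2a)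
next
  fix n p :: nat and lam
  assume "n \<ge> 1" "GW_size \<xi> (n + 1) > 0" "(\<Sum>lam\<in>{lam\<in>partitions n. size lam = p}. gw_q \<xi> n lam) > 0"
  then show "(if size lam = p then gw_q \<xi> n lam else 0)
                       / (\<Sum>mu\<in>{mu\<in>partitions n. size mu = p}. gw_q \<xi> n mu)
                     = rearr_prob \<xi> p n lam / tau_prob \<xi> p n" by (rule part2b)
qed

end
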